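(* Let $p \ge 1$, $t \ge 0$ and $\mathbf a = [a_1\;a_2\;a_3\;a_4]^t \in \mathbb R^4$. Let $\mathbf K, \mathbf L$ be the linear maps on $\mathbb R^4$ given by $\mathbf K\mathbf y = [y_1\;\; 0.5(y_2+y_3)\;\; 0.5(y_2+y_3)\;\; y_4]^t$ and $\mathbf L\mathbf y = [0\;\; 0.5(y_2-y_3)\;\; 0.5(y_3-y_2)\;\; 0]^t$. For $\mathbf b\in\mathbb R^4$ let $\mathcal P_s(\mathbf b,t)$ denote the minimizer over $\mathbf z\in\mathbb R^4$ of $\frac12\|\mathbf z-\mathbf b\|_2^2 + t\|\mathbf z\|_{S(p)}$. Then the minimizer over $\mathbf z\in\mathbb R^4$ of $$L_s(\mathbf z,\mathbf a) = \tfrac12\|\mathbf z - \mathbf a\|_2^2 + t\|\mathbf K\mathbf z\|_{S(p)}$$ is $\bar{\mathcal P}_s(\mathbf a,t) = \mathbf L\mathbf a + \mathcal P_s(\mathbf K\mathbf a, t)$.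
   Context: For a vector $\mathbf y = [y_1\;y_2\;y_3\;y_4]^t\in\mathbb R^4$, $\|\mathbf y\|_{S(p)}$ denotes the Schatten $p$-norm (the $\ell_p$ norm of the singular values) of the $2\times2$ matrix $\begin{bmatrix} y_1 & y_2\\ y_3 & y_4\end{bmatrix}$. $\|\cdot\|_2$ is the Euclidean norm. *)

theory Defs
  imports "HOL-Analysis.Analysis"
begin

definition mat2 :: "real^4 \<Rightarrow> real^2^2" where
  "mat2 y = (\<chi> i j. if i = 1 then (if j = 1 then y$1 else y$2)
                     else (if j = 1 then y$3 else y$4))"

text \<open>Singular values: square roots of the two eigenvalues of the symmetric
  positive semidefinite Gram matrix G = M^T M, given by the closed-form
  eigenvalue formula for a symmetric 2x2 matrix.\<close>
definition singvals :: "real^4 \<Rightarrow> real \<times> real" where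
  "singvals y = (let G = transpose (mat2 y) ** mat2 y;
                     tr = G$1$1 + G$2$2;
                     disc = sqrt ((G$1$1 - G$2$2)^2 + 4 * (G$1$2)^2)
                 in (sqrt ((tr + disc) / 2), sqrt ((tr - disc) / 2)))"

definition schatten :: "real \<Rightarrow> real^4 \<Rightarrow> real" where
  "schatten p y = ((fst (singvals y)) powr p + (snd (singvals y)) powr p) powr (1 / p)"

definition Kmap :: "real^4 \<Rightarrow> real^4" where
  "Kmap y = vector [y$1, (y$2 + y$3) / 2, (y$2 + y$3) / 2, y$4]"

definition Lmap :: "real^4 \<Rightarrow> real^4" where
  "Lmap y = vector [0, (y$2 - y$3) / 2, (y$3 - y$2) / 2, 0]"

definition is_minimizer :: "('a \<Rightarrow> real) \<Rightarrow> 'a \<Rightarrow> bool" where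
  "is_minimizer f z \<longleftrightarrow> (\<forall>w. f z \<le> f w)"

definition Ps :: "real \<Rightarrow> real^4 \<Rightarrow> real \<Rightarrow> real^4" where
  "Ps p b t = (THE z. is_minimizer (\<lambda>z. (1/2) * (norm (z - b))^2 + t * schatten p z) z)"

definition Ls :: "real \<Rightarrow> real \<Rightarrow> real^4 \<Rightarrow> real^4 \<Rightarrow> real" where
  "Ls p t z a = (1/2) * (norm (z - a))^2 + t * schatten p (Kmap z)"

end

theory Submission
  imports Defs "HOL-Analysis.Analysis"
begin

lemma vector_4 [simp]:
  "(vector[a,b,c,d]::'a::zero^4)$1 = a" "(vector[a,b,c,d]::'a::zero^4)$2 = b"
  "(vector[a,b,c,d]::'a::zero^4)$3 = c" "(vector[a,b,c,d]::'a::zero^4)$4 = d"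
  by (simp_all add: vector_def)

lemma norm4_sq: "(norm (x::real^4))^2 = (x$1)^2 + (x$2)^2 + (x$3)^2 + (x$4)^2"
proof -
  have "(norm x)^2 = inner x x" by (rule power2_norm_eq_inner)
  also have "\<dots> = (x$1)^2 + (x$2)^2 + (x$3)^2 + (x$4)^2"
    by (simp add: inner_vec_def sum_4 power2_eq_square)
  finally show ?thesis .
qed

definition nu :: "real^4 \<Rightarrow> real" where
  "nu z = sqrt (((z$1+z$4)/2)^2 + ((z$3-z$2)/2)^2)"
definition nv :: "real^4 \<Rightarrow> real" where
  "nv z = sqrt (((z$1-z$4)/2)^2 + ((z$2+z$3)/2)^2)"

lemma singvals_eq: "singvals z = (nu z + nv z, \<bar>nu z - nv z\<bar>)"
proof -
  define G where "G = transpose (mat2 z) ** mat2 z"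
  have G11: "G$1$1 = (z$1)^2 + (z$3)^2" and G22: "G$2$2 = (z$2)^2 + (z$4)^2"
   and G12: "G$1$2 = z$1*z$2 + z$3*z$4"
    by (simp_all add: G_def matrix_matrix_mult_def transpose_def mat2_def sum_2 power2_eq_square)
  have nu2: "(nu z)^2 = ((z$1+z$4)/2)^2 + ((z$3-z$2)/2)^2" unfolding nu_def by simp
  have nv2: "(nv z)^2 = ((z$1-z$4)/2)^2 + ((z$2+z$3)/2)^2" unfolding nv_def by simp
  have nn: "nu z \<ge> 0" "nv z \<ge> 0" by (simp_all add: nu_def nv_def)
  have tr: "G$1$1 + G$2$2 = 2 * ((nu z)^2 + (nv z)^2)"
    unfolding G11 G22 nu2 nv2 by (simp add: field_simps power2_eq_square)
  have "(G$1$1 - G$2$2)^2 + 4 * (G$1$2)^2 = (4 * nu z * nv z)^2"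
    unfolding G11 G22 G12 power_mult_distrib[of "4 * nu z"] power_mult_distrib[of 4] nu2 nv2
    by (simp add: field_simps power2_eq_square)
  hence disc: "sqrt ((G$1$1 - G$2$2)^2 + 4 * (G$1$2)^2) = 4 * nu z * nv z"
    using nn by simp
  have e1: "(2 * ((nu z)^2 + (nv z)^2) + 4 * nu z * nv z) / 2 = (nu z + nv z)^2"
    by (simp add: algebra_simps power2_eq_square)
  have e2: "(2 * ((nu z)^2 + (nv z)^2) - 4 * nu z * nv z) / 2 = (nu z - nv z)^2"
    by (simp add: field_simps power2_eq_square)
  show ?thesis
    unfolding singvals_def Let_def G_def[symmetric] tr disc e1 e2 using nn by simp
qed

definition lp :: "real \<Rightarrow> real \<Rightarrow> real \<Rightarrow> real" where
  "lp p a b = (\<bar>a\<bar> powr p + \<bar>b\<bar> powr p) powr (1/p)"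

lemma lp_nonneg: "lp p a b \<ge> 0" by (simp add: lp_def)

lemma lp_pow: assumes "p \<ge> 1" shows "(lp p a b) powr p = \<bar>a\<bar> powr p + \<bar>b\<bar> powr p"
  using assms by (simp add: lp_def powr_powr)

lemma lp_zero: assumes "p \<ge> 1" "lp p a b = 0" shows "a = 0" "b = 0"
proof -
  have "\<bar>a\<bar> powr p + \<bar>b\<bar> powr p = 0" using assms by (simp add: lp_def)
  moreover have "\<bar>a\<bar> powr p \<ge> 0" "\<bar>b\<bar> powr p \<ge> 0" by auto
  ultimately have "\<bar>a\<bar> powr p = 0" "\<bar>b\<bar> powr p = 0" by linarith+
  thus "a = 0" "b = 0" by auto
qed

lemma lp_hom: assumes "p \<ge> 1" shows "lp p (c*a) (c*b) = \<bar>c\<bar> * lp p a b"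
proof -
  have "\<bar>c*a\<bar> powr p + \<bar>c*b\<bar> powr p = \<bar>c\<bar> powr p * (\<bar>a\<bar> powr p + \<bar>b\<bar> powr p)"
    by (simp add: abs_mult powr_mult algebra_simps)
  hence "lp p (c*a) (c*b) = (\<bar>c\<bar> powr p) powr (1/p) * lp p a b"
    by (simp add: lp_def powr_mult)
  also have "(\<bar>c\<bar> powr p) powr (1/p) = \<bar>c\<bar>" using assms by (simp add: powr_powr)
  finally show ?thesis .
qed

lemma lp_abs: "lp p a b = lp p \<bar>a\<bar> \<bar>b\<bar>" by (simp add: lp_def)
lemma lp_swap: "lp p a b = lp p b a" by (simp add: lp_def add.commute)

lemma powr_scale_le:
  fixes p c x :: real
  assumes "p \<ge> 1" "0 \<le> c" "c \<le> 1" "0 \<le> x"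
  shows "(c*x) powr p \<le> c * x powr p"
proof (cases "c = 0")
  case True thus ?thesis using assms by simp
next
  case False
  hence "c powr p \<le> c" using assms False by (intro powr_le_one_le) auto
  hence "c powr p * x powr p \<le> c * x powr p" by (rule mult_right_mono) simp
  thus ?thesis using assms by (simp add: powr_mult)
qed

lemma pconv:
  fixes p a b l :: real
  assumes p: "p \<ge> 1" and "a \<ge> 0" "b \<ge> 0" "0 \<le> l" "l \<le> 1"
  shows "(l*a+(1-l)*b) powr p \<le> l * a powr p + (1-l) * b powr p"
proof (cases "a > 0 \<and> b > 0")
  case True
  have "((1-l)*b + l*a) powr p \<le> (1-l) * b powr p + l * a powr p"
    using convex_onD[OF powr_convex[OF p], of l b a] True assms by simp
  thus ?thesis by (simp add: algebra_simps)
next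
  case False
  hence "a = 0 \<or> b = 0" using assms by auto
  thus ?thesis
  proof
    assume "a = 0"
    thus ?thesis using powr_scale_le[of p "1-l" b] assms by simp
  next
    assume "b = 0"
    thus ?thesis using powr_scale_le[of p l a] assms by simp
  qed
qed

lemma lp_le1: assumes "p \<ge> 1" "(lp p a b) powr p \<le> 1" shows "lp p a b \<le> 1"
proof (rule ccontr)
  assume "\<not> ?thesis"
  hence "1 < lp p a b" by simp
  hence "1 powr p < (lp p a b) powr p" using assms by (intro powr_less_mono2) auto
  thus False using assms by simp
qed

lemma lp_tri:
  assumes p: "p \<ge> 1"
  shows "lp p (a1+a2) (b1+b2) \<le> lp p a1 b1 + lp p a2 b2"
proof -
  define s where "s = lp p a1 b1"
  define r where "r = lp p a2 b2"
  have s0: "s \<ge> 0" and r0: "r \<ge> 0" by (simp_all add: s_def r_def lp_nonneg)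
  show ?thesis
  proof (cases "s = 0 \<or> r = 0")
    case True
    thus ?thesis
    proof
      assume "s = 0" hence "a1 = 0" "b1 = 0" using lp_zero[OF p, of a1 b1] unfolding s_def by auto
      thus ?thesis by (simp add: lp_nonneg)
    next
      assume "r = 0" hence "a2 = 0" "b2 = 0" using lp_zero[OF p, of a2 b2] unfolding r_def by auto
      thus ?thesis by (simp add: lp_nonneg)
    qed
  next
    case False
    hence sp: "s > 0" and rp: "r > 0" using s0 r0 by auto
    define l where "l = s/(s+r)"
    have l0: "0 \<le> l" and l1: "l \<le> 1" using sp rp by (simp_all add: l_def)
    have ls: "1 - l = r/(s+r)" using sp rp by (simp add: l_def field_simps)
    have one1: "\<bar>a1/s\<bar> powr p + \<bar>b1/s\<bar> powr p = 1"
    proof -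
      have "lp p ((1/s)*a1) ((1/s)*b1) = 1" using lp_hom[OF p, of "1/s" a1 b1] sp s_def by simp
      hence "(lp p ((1/s)*a1) ((1/s)*b1)) powr p = 1" by simp
      thus ?thesis using lp_pow[OF p] by simp
    qed
    have one2: "\<bar>a2/r\<bar> powr p + \<bar>b2/r\<bar> powr p = 1"
    proof -
      have "lp p ((1/r)*a2) ((1/r)*b2) = 1" using lp_hom[OF p, of "1/r" a2 b2] rp r_def by simp
      hence "(lp p ((1/r)*a2) ((1/r)*b2)) powr p = 1" by simp
      thus ?thesis using lp_pow[OF p] by simp
    qed
    have key: "\<And>x y. \<bar>(x+y)/(s+r)\<bar> powr p \<le> l * \<bar>x/s\<bar> powr p + (1-l) * \<bar>y/r\<bar> powr p"
    proof -
      fix x y :: real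
      have e1: "l*(x/s) = x/(s+r)" unfolding l_def using sp rp by simp
      have e2: "(1-l)*(y/r) = y/(s+r)" unfolding ls using sp rp by simp
      have "(x+y)/(s+r) = l*(x/s) + (1-l)*(y/r)" unfolding e1 e2 by (simp add: add_divide_distrib)
      hence "\<bar>(x+y)/(s+r)\<bar> = \<bar>l*(x/s) + (1-l)*(y/r)\<bar>" by simp
      also have "\<dots> \<le> \<bar>l*(x/s)\<bar> + \<bar>(1-l)*(y/r)\<bar>" by (rule abs_triangle_ineq)
      also have "\<dots> = l*\<bar>x/s\<bar> + (1-l)*\<bar>y/r\<bar>" using l0 l1 by (simp add: abs_mult)
      finally have "\<bar>(x+y)/(s+r)\<bar> \<le> l*\<bar>x/s\<bar> + (1-l)*\<bar>y/r\<bar>" .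
      hence "\<bar>(x+y)/(s+r)\<bar> powr p \<le> (l*\<bar>x/s\<bar> + (1-l)*\<bar>y/r\<bar>) powr p"
        using p by (intro powr_mono2) auto
      also have "\<dots> \<le> l * \<bar>x/s\<bar> powr p + (1-l) * \<bar>y/r\<bar> powr p"
        using pconv[OF p, of "\<bar>x/s\<bar>" "\<bar>y/r\<bar>" l] l0 l1 by simp
      finally show "\<bar>(x+y)/(s+r)\<bar> powr p \<le> l * \<bar>x/s\<bar> powr p + (1-l) * \<bar>y/r\<bar> powr p" .
    qed
    define c where "c = 1/(s+r)"
    have c0: "c > 0" using sp rp by (simp add: c_def)
    have "(lp p (c*(a1+a2)) (c*(b1+b2))) powr p
          = \<bar>(a1+a2)/(s+r)\<bar> powr p + \<bar>(b1+b2)/(s+r)\<bar> powr p"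
      using lp_pow[OF p] by (simp add: c_def)
    also have "\<dots> \<le> l * (\<bar>a1/s\<bar> powr p + \<bar>b1/s\<bar> powr p) + (1-l) * (\<bar>a2/r\<bar> powr p + \<bar>b2/r\<bar> powr p)"
      using key[of a1 a2] key[of b1 b2] by (simp add: algebra_simps)
    also have "\<dots> = 1" using one1 one2 by simp
    finally have "lp p (c*(a1+a2)) (c*(b1+b2)) \<le> 1" by (rule lp_le1[OF p])
    hence "c * lp p (a1+a2) (b1+b2) \<le> 1" using lp_hom[OF p, of c] c0 by simp
    hence "(s+r) * (c * lp p (a1+a2) (b1+b2)) \<le> (s+r) * 1"
      using sp rp by (intro mult_left_mono) auto
    thus ?thesis using sp rp unfolding s_def[symmetric] r_def[symmetric] c_def by simp
  qed
qed


lemma schatten_eq: "schatten p z = lp p (nu z + nv z) (nu z - nv z)"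
proof -
  have "nu z \<ge> 0" "nv z \<ge> 0" by (simp_all add: nu_def nv_def)
  thus ?thesis by (simp add: schatten_def singvals_eq lp_def)
qed

lemma nn_sym: "lp p (x+y) (x-y) = lp p (y+x) (y-x)"
  by (simp add: lp_def abs_minus_commute add.commute)

lemma nn_mono:
  fixes p x x' y :: real
  assumes p: "p \<ge> 1" and "0 \<le> x" "x \<le> x'"
  shows "lp p (x+y) (x-y) \<le> lp p (x'+y) (x'-y)"
proof (cases "x' = 0")
  case True thus ?thesis using assms by simp
next
  case False
  hence xp: "x' > 0" using assms by simp
  define l where "l = (x+x')/(2*x')"
  have l0: "0 \<le> l" and l1: "l \<le> 1" using assms xp by (simp_all add: l_def field_simps)
  have a1: "x + y = l*(x'+y) + (1-l)*(y-x')" using xp by (simp add: l_def field_simps)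
  have a2: "x - y = l*(x'-y) + (1-l)*(-x'-y)" using xp by (simp add: l_def field_simps)
  have "lp p (x+y) (x-y) \<le> lp p (l*(x'+y)) (l*(x'-y)) + lp p ((1-l)*(y-x')) ((1-l)*(-x'-y))"
    unfolding a1 a2 by (rule lp_tri[OF p])
  also have "\<dots> = l * lp p (x'+y) (x'-y) + (1-l) * lp p (y-x') (-x'-y)"
    using l0 l1 by (simp add: lp_hom[OF p])
  also have "lp p (y-x') (-x'-y) = lp p (x'+y) (x'-y)"
    by (simp add: lp_def abs_minus_commute add.commute)
  finally show ?thesis by (simp add: algebra_simps)
qed

lemma nu_tri: "nu (z + w) \<le> nu z + nu w"
proof -
  have "nu (z+w) = sqrt (((z$1+z$4)/2 + (w$1+w$4)/2)^2 + ((z$3-z$2)/2 + (w$3-w$2)/2)^2)"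
    unfolding nu_def by (simp add: algebra_simps add_divide_distrib[symmetric])
  also have "\<dots> \<le> nu z + nu w" unfolding nu_def by (rule real_sqrt_sum_squares_triangle_ineq)
  finally show ?thesis .
qed

lemma nv_tri: "nv (z + w) \<le> nv z + nv w"
proof -
  have "nv (z+w) = sqrt (((z$1-z$4)/2 + (w$1-w$4)/2)^2 + ((z$2+z$3)/2 + (w$2+w$3)/2)^2)"
    unfolding nv_def by (simp add: algebra_simps add_divide_distrib[symmetric])
  also have "\<dots> \<le> nv z + nv w" unfolding nv_def by (rule real_sqrt_sum_squares_triangle_ineq)
  finally show ?thesis .
qed

lemma nu_hom: "nu (c *\<^sub>R z) = \<bar>c\<bar> * nu z"
proof -
  have "nu (c *\<^sub>R z) = sqrt (c^2 * (((z$1+z$4)/2)^2 + ((z$3-z$2)/2)^2))"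
    unfolding nu_def by (simp add: power2_eq_square algebra_simps)
  thus ?thesis by (simp add: real_sqrt_mult nu_def)
qed

lemma nv_hom: "nv (c *\<^sub>R z) = \<bar>c\<bar> * nv z"
proof -
  have "nv (c *\<^sub>R z) = sqrt (c^2 * (((z$1-z$4)/2)^2 + ((z$2+z$3)/2)^2))"
    unfolding nv_def by (simp add: power2_eq_square algebra_simps)
  thus ?thesis by (simp add: real_sqrt_mult nv_def)
qed

lemma S_tri: assumes p: "p \<ge> 1" shows "schatten p (z + w) \<le> schatten p z + schatten p w"
proof -
  have nn: "nu (z+w) \<ge> 0" "nv (z+w) \<ge> 0" by (simp_all add: nu_def nv_def)
  have "schatten p (z+w) = lp p (nu (z+w) + nv (z+w)) (nu (z+w) - nv (z+w))" by (rule schatten_eq)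
  also have "\<dots> \<le> lp p ((nu z + nu w) + nv (z+w)) ((nu z + nu w) - nv (z+w))"
    using nn nu_tri by (intro nn_mono[OF p]) auto
  also have "\<dots> = lp p (nv (z+w) + (nu z + nu w)) (nv (z+w) - (nu z + nu w))" by (rule nn_sym)
  also have "\<dots> \<le> lp p ((nv z + nv w) + (nu z + nu w)) ((nv z + nv w) - (nu z + nu w))"
    using nn nv_tri by (intro nn_mono[OF p]) auto
  also have "\<dots> = lp p ((nu z + nv z) + (nu w + nv w)) ((nu z - nv z) + (nu w - nv w))"
    by (simp add: lp_def abs_minus_commute algebra_simps)
  also have "\<dots> \<le> schatten p z + schatten p w" unfolding schatten_eq by (rule lp_tri[OF p])
  finally show ?thesis .
qed

lemma S_hom: assumes p: "p \<ge> 1" shows "schatten p (c *\<^sub>R z) = \<bar>c\<bar> * schatten p z"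
  unfolding schatten_eq nu_hom nv_hom
  using lp_hom[OF p, of "\<bar>c\<bar>" "nu z + nv z" "nu z - nv z"] by (simp add: algebra_simps)

lemma S_convex: assumes p: "p \<ge> 1" shows "convex_on UNIV (schatten p)"
proof (rule convex_onI)
  fix t :: real and x y :: "real^4"
  assume t: "0 < t" "t < 1"
  have "schatten p ((1 - t) *\<^sub>R x + t *\<^sub>R y) \<le> schatten p ((1 - t) *\<^sub>R x) + schatten p (t *\<^sub>R y)"
    by (rule S_tri[OF p])
  also have "\<dots> = (1-t) * schatten p x + t * schatten p y" using t by (simp add: S_hom[OF p])
  finally show "schatten p ((1 - t) *\<^sub>R x + t *\<^sub>R y) \<le> (1 - t) * schatten p x + t * schatten p y" .
qed auto

lemma S_cont: assumes p: "p \<ge> 1" shows "continuous_on UNIV (schatten p)"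
  by (rule convex_on_continuous[OF open_UNIV S_convex[OF p]])


definition swp :: "real^4 \<Rightarrow> real^4" where
  "swp z = vector [z$1, z$3, z$2, z$4]"

lemma S_swp: "schatten p (swp z) = schatten p z"
proof -
  have "nu (swp z) = nu z" unfolding nu_def swp_def by (simp add: power_divide power2_commute)
  moreover have "nv (swp z) = nv z" unfolding nv_def swp_def by (simp add: add.commute)
  ultimately show ?thesis by (simp add: schatten_eq)
qed

lemma norm_swp: assumes "b$2 = b$3" shows "norm (swp z - b) = norm (z - b)"
proof -
  have "(norm (swp z - b))^2 = (norm (z - b))^2"
    unfolding norm4_sq using assms by (simp add: swp_def algebra_simps)
  thus ?thesis by simp
qed

lemma F_exists:
  fixes p t :: real and b :: "real^4"
  assumes p: "p \<ge> 1" and t: "t \<ge> 0"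
  shows "\<exists>z. is_minimizer (\<lambda>z. (1/2) * (norm (z - b))^2 + t * schatten p z) z"
proof -
  define F where "F = (\<lambda>z::real^4. (1/2) * (norm (z - b))^2 + t * schatten p z)"
  define R where "R = 2 * t * schatten p b + 1"
  have Sb: "schatten p b \<ge> 0" by (simp add: schatten_eq lp_nonneg)
  have R1: "R \<ge> 1" using Sb t by (simp add: R_def)
  have cont: "continuous_on (cball b R) F"
    unfolding F_def
    by (intro continuous_intros continuous_on_subset[OF S_cont[OF p]]) auto
  obtain x where x: "x \<in> cball b R" and xm: "\<forall>y\<in>cball b R. F x \<le> F y"
    using continuous_attains_inf[OF compact_cball _ cont] R1 by fastforce
  have "F x \<le> F w" for w
  proof (cases "w \<in> cball b R")
    case True thus ?thesis using xm by blast
  next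
    case False
    hence d: "norm (w - b) > R" by (simp add: dist_norm norm_minus_commute)
    have Fxb: "F x \<le> F b" using xm R1 by simp
    have "F b = t * schatten p b" by (simp add: F_def)
    also have "\<dots> < R / 2" using R_def by simp
    also have "R / 2 \<le> (1/2) * R^2" using R1 by (simp add: power2_eq_square)
    also have "(1/2) * R^2 \<le> (1/2) * (norm (w - b))^2"
      using d R1 by (intro mult_left_mono power_mono) auto
    also have "\<dots> \<le> F w" unfolding F_def using t Sb
      by (simp add: schatten_eq lp_nonneg)
    finally show ?thesis using Fxb by simp
  qed
  thus ?thesis unfolding is_minimizer_def F_def by blast
qed

lemma F_unique:
  fixes p t :: real and b z1 z2 :: "real^4"
  assumes p: "p \<ge> 1" and t: "t \<ge> 0"
    and m1: "is_minimizer (\<lambda>z. (1/2) * (norm (z - b))^2 + t * schatten p z) z1"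
    and m2: "is_minimizer (\<lambda>z. (1/2) * (norm (z - b))^2 + t * schatten p z) z2"
  shows "z1 = z2"
proof (rule ccontr)
  assume ne: "z1 \<noteq> z2"
  define F where "F = (\<lambda>z::real^4. (1/2) * (norm (z - b))^2 + t * schatten p z)"
  define w where "w = (1 - 1/2) *\<^sub>R z1 + (1/2) *\<^sub>R z2"
  have S: "schatten p w \<le> (1 - 1/2) * schatten p z1 + (1/2) * schatten p z2"
    unfolding w_def by (rule convex_onD[OF S_convex[OF p]]) auto
  have par: "(norm (w - b))^2 = ((norm (z1 - b))^2 + (norm (z2 - b))^2)/2 - (norm (z1 - z2))^2/4"
    unfolding norm4_sq w_def by (simp add: power2_eq_square field_simps)
  have "(norm (z1 - z2))^2 > 0" using ne by simp
  hence "(norm (w - b))^2 < ((norm (z1 - b))^2 + (norm (z2 - b))^2)/2" using par by linarith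
  moreover have "t * schatten p w \<le> t * ((1 - 1/2) * schatten p z1 + (1/2) * schatten p z2)"
    by (rule mult_left_mono[OF S t])
  ultimately have "F w < (F z1 + F z2) / 2" unfolding F_def by (simp add: algebra_simps)
  moreover have "F z1 \<le> F w" "F z2 \<le> F w"
    using m1 m2 unfolding is_minimizer_def F_def by auto
  ultimately show False by simp
qed

lemma Ps_prop:
  fixes p t :: real and b :: "real^4"
  assumes p: "p \<ge> 1" and t: "t \<ge> 0"
  shows "is_minimizer (\<lambda>z. (1/2) * (norm (z - b))^2 + t * schatten p z) (Ps p b t)"
    and "\<And>z. is_minimizer (\<lambda>z. (1/2) * (norm (z - b))^2 + t * schatten p z) z \<Longrightarrow> z = Ps p b t"
proof -
  have ex1: "\<exists>!z. is_minimizer (\<lambda>z. (1/2) * (norm (z - b))^2 + t * schatten p z) z"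
    using F_exists[OF p t, of b] F_unique[OF p t, of b] by blast
  show "is_minimizer (\<lambda>z. (1/2) * (norm (z - b))^2 + t * schatten p z) (Ps p b t)"
    unfolding Ps_def by (rule theI'[OF ex1])
  show "\<And>z. is_minimizer (\<lambda>z. (1/2) * (norm (z - b))^2 + t * schatten p z) z \<Longrightarrow> z = Ps p b t"
    unfolding Ps_def using the1_equality[OF ex1] by auto
qed


lemma Ls_decomp: "Ls p t z a = ((1/2) * (norm (Kmap z - Kmap a))^2 + t * schatten p (Kmap z))
   + (1/2) * (norm (Lmap z - Lmap a))^2"
proof -
  have "(norm (z - a))^2 = (norm (Kmap z - Kmap a))^2 + (norm (Lmap z - Lmap a))^2"
    unfolding norm4_sq by (simp add: Kmap_def Lmap_def power2_eq_square field_simps)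
  thus ?thesis unfolding Ls_def by (simp add: algebra_simps)
qed

theorem proposition3:
  fixes p t :: real and a :: "real^4"
  assumes "p \<ge> 1" and "t \<ge> 0"
  shows "\<forall>z. is_minimizer (\<lambda>z. Ls p t z a) z \<longleftrightarrow> z = Lmap a + Ps p (Kmap a) t"
proof -
  define P where "P = Ps p (Kmap a) t"
  define G where "G = (\<lambda>z. (1/2) * (norm (z - Kmap a))^2 + t * schatten p z)"
  have Pmin: "is_minimizer G P" unfolding G_def P_def by (rule Ps_prop(1)[OF assms])
  have Puniq: "\<And>z. is_minimizer G z \<Longrightarrow> z = P" unfolding G_def P_def by (rule Ps_prop(2)[OF assms])
  have Ka: "Kmap a $ 2 = Kmap a $ 3" by (simp add: Kmap_def)
  have "G (swp P) = G P" unfolding G_def using norm_swp[OF Ka] S_swp by simp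
  hence "is_minimizer G (swp P)" using Pmin unfolding is_minimizer_def by simp
  hence "swp P = P" by (rule Puniq)
  hence Psym: "P $ 2 = P $ 3" by (metis swp_def vector_4(2))
  define z0 where "z0 = Lmap a + P"
  have Kz0: "Kmap z0 = P" unfolding z0_def Kmap_def Lmap_def using Psym
    by (simp add: vec_eq_iff forall_4 field_simps)
  have Lz0: "Lmap z0 = Lmap a" unfolding z0_def Kmap_def Lmap_def using Psym
    by (simp add: vec_eq_iff forall_4 field_simps)
  have dec: "\<And>z. Ls p t z a = G (Kmap z) + (1/2) * (norm (Lmap z - Lmap a))^2"
    unfolding G_def by (rule Ls_decomp)
  have Lsz0: "Ls p t z0 a = G P" using dec[of z0] Kz0 Lz0 by simp
  have low: "\<And>z. G P \<le> Ls p t z a"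
  proof -
    fix z
    have "G P \<le> G (Kmap z)" using Pmin unfolding is_minimizer_def by simp
    moreover have "(norm (Lmap z - Lmap a))^2 \<ge> 0" by simp
    ultimately show "G P \<le> Ls p t z a" using dec[of z] by linarith
  qed
  have z0min: "is_minimizer (\<lambda>z. Ls p t z a) z0"
    unfolding is_minimizer_def using Lsz0 low by simp
  show ?thesis
  proof (intro allI iffI)
    fix z assume "z = Lmap a + Ps p (Kmap a) t"
    thus "is_minimizer (\<lambda>z. Ls p t z a) z" using z0min by (simp add: z0_def P_def)
  next
    fix z assume zm: "is_minimizer (\<lambda>z. Ls p t z a) z"
    hence le: "Ls p t z a \<le> G P" using Lsz0 unfolding is_minimizer_def by metis
    have GK: "G P \<le> G (Kmap z)" using Pmin unfolding is_minimizer_def by simp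
    have nn: "(norm (Lmap z - Lmap a))^2 \<ge> 0" by simp
    have "G (Kmap z) \<le> G P" using le dec[of z] nn by linarith
    hence "is_minimizer G (Kmap z)" using Pmin unfolding is_minimizer_def by (meson order_trans)
    hence KP: "Kmap z = P" by (rule Puniq)
    have "(norm (Lmap z - Lmap a))^2 \<le> 0" using le dec[of z] GK by linarith
    hence LL: "Lmap z = Lmap a" by simp
    have "z = Kmap z + Lmap z" unfolding Kmap_def Lmap_def
      by (simp add: vec_eq_iff forall_4 field_simps)
    thus "z = Lmap a + Ps p (Kmap a) t" using KP LL by (simp add: P_def add.commute)
  qed
qed

end
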